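(* Let $\alpha>0$ and $p_0\in L^1(\mathbb{R})\cap L^\infty(\mathbb{R})$ with $p_0\ge0$, $\int_{\mathbb{R}}p_0=1$ and $D(p_0)=0$. Then $F_{p_0}\in C^0([0,+\infty))\cap C^\infty((0,+\infty))$, $F_{p_0}>0$ on $(0,+\infty)$, and $F_{p_0}'>0$ on $(0,+\infty)$.
   Context: For $f\in L^1(\mathbb{R})$, $D(f)=\alpha\int_{|\sigma|>1}f(\sigma)\,d\sigma$. For $\eta>0$, $\varphi_\eta(x)=\frac{1}{\sqrt{2\pi}\eta}e^{-x^2/(2\eta^2)}$. $F_{p_0}:[0,+\infty)\to[0,+\infty)$ is defined by $F_{p_0}(0)=D(p_0)$ and, for $x>0$, $F_{p_0}(x)=\alpha\int_{|\sigma|>1}\Big(\int_{\mathbb{R}}p_0(\sigma')\varphi_{\sqrt{2x}}(\sigma-\sigma')\,d\sigma'\Big)d\sigma$. *)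

theory Defs
  imports "HOL-Analysis.Analysis"
begin

definition D_fun :: "real \<Rightarrow> (real \<Rightarrow> real) \<Rightarrow> real" where
  "D_fun \<alpha> f = \<alpha> * (LINT \<sigma>:{\<sigma>. 1 < \<bar>\<sigma>\<bar>}|lborel. f \<sigma>)"

definition gauss :: "real \<Rightarrow> real \<Rightarrow> real" where
  "gauss \<eta> x = 1 / (sqrt (2 * pi) * \<eta>) * exp (- (x\<^sup>2) / (2 * \<eta>\<^sup>2))"

text \<open>F_{p0} on [0,+infty) (values at negative arguments are irrelevant).\<close>
definition F_fun :: "real \<Rightarrow> (real \<Rightarrow> real) \<Rightarrow> real \<Rightarrow> real" where
  "F_fun \<alpha> p0 x = (if x = 0 then D_fun \<alpha> p0
     else \<alpha> * (LINT \<sigma>:{\<sigma>. 1 < \<bar>\<sigma>\<bar>}|lborel.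
                 (LINT \<sigma>'|lborel. p0 \<sigma>' * gauss (sqrt (2 * x)) (\<sigma> - \<sigma>'))))"

definition smooth_on_open :: "real set \<Rightarrow> (real \<Rightarrow> real) \<Rightarrow> bool" where
  "smooth_on_open S f \<longleftrightarrow> (\<forall>k. \<forall>x\<in>S. ((deriv ^^ k) f) differentiable (at x))"

end

theory Submission
  imports Defs "HOL-Probability.Distributions" "HOL-Real_Asymp.Real_Asymp"
begin


definition sm :: "nat \<Rightarrow> real set \<Rightarrow> (real \<Rightarrow> real) \<Rightarrow> bool" where
  "sm n S f \<longleftrightarrow> (\<forall>k\<le>n. \<forall>x\<in>S. ((deriv ^^ k) f) differentiable (at x))"

lemma sm_0: "sm 0 S f \<longleftrightarrow> (\<forall>x\<in>S. f differentiable (at x))"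
  by (simp add: sm_def)

lemma sm_Suc: "sm (Suc n) S f \<longleftrightarrow> (\<forall>x\<in>S. f differentiable (at x)) \<and> sm n S (deriv f)"
proof
  assume a: "sm (Suc n) S f"
  have "sm n S (deriv f)" unfolding sm_def
  proof (intro allI impI ballI)
    fix k x assume "k \<le> n" "x \<in> S"
    then have "(deriv ^^ Suc k) f differentiable (at x)" using a unfolding sm_def by auto
    then show "(deriv ^^ k) (deriv f) differentiable (at x)" by (simp only: funpow_Suc_right o_def)
  qed
  then show "(\<forall>x\<in>S. f differentiable (at x)) \<and> sm n S (deriv f)" using a unfolding sm_def by auto
next
  assume a: "(\<forall>x\<in>S. f differentiable (at x)) \<and> sm n S (deriv f)"
  show "sm (Suc n) S f" unfolding sm_def
  proof (intro allI impI ballI)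
    fix k x assume "k \<le> Suc n" "x \<in> S"
    then show "(deriv ^^ k) f differentiable (at x)"
    proof (cases k)
      case 0 then show ?thesis using a \<open>x \<in> S\<close> by simp
    next
      case (Suc j)
      then have "(deriv ^^ j) (deriv f) differentiable (at x)" using a \<open>k \<le> Suc n\<close> \<open>x\<in>S\<close> unfolding sm_def by auto
      then show ?thesis using Suc by (simp only: funpow_Suc_right o_def)
    qed
  qed
qed

lemma sm_mono: "sm (Suc n) S f \<Longrightarrow> sm n S f"
  by (simp add: sm_def)

lemma sm_diff: "sm n S f \<Longrightarrow> x \<in> S \<Longrightarrow> (f has_real_derivative deriv f x) (at x)"
  by (cases n) (auto simp: sm_0 sm_Suc DERIV_deriv_iff_real_differentiable)

lemma deriv_cong_open:
  fixes f g :: "real \<Rightarrow> real"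
  assumes "open S" "\<forall>x\<in>S. f x = g x" "x \<in> S" "f differentiable (at x)"
  shows "deriv f x = deriv g x" "g differentiable (at x)"
proof -
  have "(f has_real_derivative deriv f x) (at x)" using assms(4) DERIV_deriv_iff_real_differentiable by blast
  then have "(g has_real_derivative deriv f x) (at x)"
    using has_field_derivative_transform_within_open assms(1,2,3) by blast
  then show "deriv f x = deriv g x" "g differentiable (at x)"
    by (auto simp: DERIV_imp_deriv real_differentiable_def)
qed

lemma sm_cong:
  assumes "open S" "\<forall>x\<in>S. f x = g x" "sm n S f"
  shows "sm n S g"
  using assms
proof (induction n arbitrary: f g)
  case 0 then show ?case using deriv_cong_open(2) by (auto simp: sm_0)
next
  case (Suc n)
  have d: "\<forall>x\<in>S. f differentiable (at x)" using Suc.prems by (simp add: sm_Suc)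
  have "\<forall>x\<in>S. deriv f x = deriv g x" using deriv_cong_open(1)[OF Suc.prems(1,2)] d by blast
  moreover have "sm n S (deriv f)" using Suc.prems by (simp add: sm_Suc)
  ultimately have "sm n S (deriv g)" using Suc.IH Suc.prems(1) by blast
  then show ?case using d deriv_cong_open(2)[OF Suc.prems(1,2)] by (auto simp: sm_Suc)
qed

lemma sm_const: "sm n S (\<lambda>x. c)"
proof (induction n arbitrary: c)
  case 0 then show ?case by (simp add: sm_0)
next
  case (Suc n)
  have "deriv (\<lambda>x. c) = (\<lambda>x. 0)" by (rule ext) simp
  then show ?case using Suc by (simp add: sm_Suc)
qed

lemma sm_id: "sm n S (\<lambda>x. x)"
proof (cases n)
  case 0 then show ?thesis by (simp add: sm_0)
next
  case (Suc m)
  have "deriv (\<lambda>x. x) = (\<lambda>x. 1)" by (rule ext) simp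
  then show ?thesis using Suc sm_const by (simp add: sm_Suc)
qed

lemma sm_exp: "sm n S exp"
proof (induction n)
  case 0 show ?case using DERIV_exp unfolding sm_0 real_differentiable_def by blast
next
  case (Suc n)
  have "deriv exp = exp" by (rule ext) (simp add: DERIV_imp_deriv)
  have "\<forall>x\<in>S. exp differentiable (at x)" using DERIV_exp unfolding real_differentiable_def by blast
  then show ?case using Suc unfolding sm_Suc \<open>deriv exp = exp\<close> by blast
qed

lemma sm_add:
  assumes "open S" "sm n S f" "sm n S g"
  shows "sm n S (\<lambda>x. f x + g x)"
  using assms(2,3)
proof (induction n arbitrary: f g)
  case 0 then show ?case by (auto simp: sm_0)
next
  case (Suc n)
  have df: "\<forall>x\<in>S. (f has_real_derivative deriv f x) (at x)" "\<forall>x\<in>S. (g has_real_derivative deriv g x) (at x)"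
    using Suc.prems sm_diff by blast+
  have e: "\<forall>x\<in>S. deriv f x + deriv g x = deriv (\<lambda>x. f x + g x) x"
    using df by (auto intro!: DERIV_imp_deriv[symmetric] derivative_eq_intros)
  have "sm n S (\<lambda>x. deriv f x + deriv g x)" using Suc by (simp add: sm_Suc)
  then have "sm n S (deriv (\<lambda>x. f x + g x))" using sm_cong[OF assms(1) e] by blast
  moreover have "\<forall>x\<in>S. (\<lambda>x. f x + g x) differentiable (at x)" using Suc.prems by (auto simp: sm_Suc)
  ultimately show ?case by (simp add: sm_Suc)
qed

lemma sm_mult:
  assumes "open S" "sm n S f" "sm n S g"
  shows "sm n S (\<lambda>x. f x * g x)"
  using assms(2,3)
proof (induction n arbitrary: f g)
  case 0 then show ?case by (auto simp: sm_0)
next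
  case (Suc n)
  have df: "\<forall>x\<in>S. (f has_real_derivative deriv f x) (at x)" "\<forall>x\<in>S. (g has_real_derivative deriv g x) (at x)"
    using Suc.prems sm_diff by blast+
  have e: "\<forall>x\<in>S. deriv f x * g x + f x * deriv g x = deriv (\<lambda>x. f x * g x) x"
    using df by (auto intro!: DERIV_imp_deriv[symmetric] derivative_eq_intros)
  have "sm n S (\<lambda>x. deriv f x * g x)" using Suc.IH Suc.prems sm_mono by (simp add: sm_Suc)
  moreover have "sm n S (\<lambda>x. f x * deriv g x)" using Suc.IH Suc.prems sm_mono by (simp add: sm_Suc)
  ultimately have "sm n S (\<lambda>x. deriv f x * g x + f x * deriv g x)" using sm_add assms(1) by blast
  then have "sm n S (deriv (\<lambda>x. f x * g x))" using sm_cong[OF assms(1) e] by blast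
  moreover have "\<forall>x\<in>S. (\<lambda>x. f x * g x) differentiable (at x)" using Suc.prems by (auto simp: sm_Suc)
  ultimately show ?case by (simp add: sm_Suc)
qed


lemma sm_comp:
  assumes "open S" "open T" "g ` S \<subseteq> T" "sm n T f" "sm n S g"
  shows "sm n S (\<lambda>x. f (g x))"
  using assms(4,5)
proof (induction n arbitrary: f)
  case 0
  show ?case unfolding sm_0
  proof
    fix x assume x: "x \<in> S"
    then have gx: "g x \<in> T" using assms(3) by blast
    have "((\<lambda>x. f (g x)) has_real_derivative deriv f (g x) * deriv g x) (at x)"
      by (rule DERIV_chain2[OF sm_diff[OF 0(1) gx] sm_diff[OF 0(2) x]])
    then show "(\<lambda>x. f (g x)) differentiable (at x)" unfolding real_differentiable_def by blast
  qed
next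
  case (Suc n)
  have df: "((\<lambda>x. f (g x)) has_real_derivative deriv f (g x) * deriv g x) (at x)" if x: "x \<in> S" for x
  proof -
    have gx: "g x \<in> T" using assms(3) x by blast
    show ?thesis by (rule DERIV_chain2[OF sm_diff[OF Suc.prems(1) gx] sm_diff[OF Suc.prems(2) x]])
  qed
  have e: "\<forall>x\<in>S. deriv f (g x) * deriv g x = deriv (\<lambda>x. f (g x)) x"
    using df DERIV_imp_deriv by metis
  have "sm n T (deriv f)" using Suc.prems(1) by (simp add: sm_Suc)
  moreover have "sm n S g" using Suc.prems(2) by (rule sm_mono)
  ultimately have "sm n S (\<lambda>x. deriv f (g x))" by (rule Suc.IH)
  moreover have "sm n S (deriv g)" using Suc.prems(2) by (simp add: sm_Suc)
  ultimately have "sm n S (\<lambda>x. deriv f (g x) * deriv g x)" using sm_mult assms(1) by blast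
  then have "sm n S (deriv (\<lambda>x. f (g x)))" using sm_cong[OF assms(1) e] by blast
  moreover have "\<forall>x\<in>S. (\<lambda>x. f (g x)) differentiable (at x)" using df unfolding real_differentiable_def by blast
  ultimately show ?case by (simp add: sm_Suc)
qed

lemma sm_powr:
  "sm n {0<..} (\<lambda>x. x powr a)"
proof (induction n arbitrary: a)
  case 0
  have "(\<lambda>x. x powr a) differentiable (at x)" if "x \<in> {0<..}" for x
    using has_real_derivative_powr[of x a] that unfolding real_differentiable_def by auto
  then show ?case unfolding sm_0 by blast
next
  case (Suc n)
  have e: "\<forall>x\<in>{0<..}. a * x powr (a - 1) = deriv (\<lambda>x. x powr a) x"
    using has_real_derivative_powr DERIV_imp_deriv by (metis greaterThan_iff)
  have "sm n {0<..} (\<lambda>x. a * x powr (a - 1))" by (rule sm_mult[OF _ sm_const Suc.IH]) simp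
  then have "sm n {0<..} (deriv (\<lambda>x. x powr a))" using sm_cong[OF open_greaterThan e] by blast
  moreover have "(\<lambda>x. x powr a) differentiable (at x)" if "x \<in> {0<..}" for x
    using has_real_derivative_powr[of x a] that unfolding real_differentiable_def by auto
  ultimately show ?case by (simp add: sm_Suc)
qed


abbreviation "phi \<equiv> std_normal_density"

lemma phi_eq: "phi = (\<lambda>z. (1 / sqrt (2 * pi)) * exp ((- 1/2) * (z * z)))"
  by (rule ext) (simp add: std_normal_density_def power2_eq_square)

lemma sm_phi: "sm n UNIV phi"
proof -
  have "sm n UNIV (\<lambda>z. z * z)"
    by (rule sm_mult[OF open_UNIV sm_id sm_id])
  then have "sm n UNIV (\<lambda>z. (- 1/2) * (z * z))"
    by (rule sm_mult[OF open_UNIV sm_const])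
  then have "sm n UNIV (\<lambda>z. exp ((- 1/2) * (z * z)))"
    by (rule sm_comp[OF open_UNIV open_UNIV subset_UNIV sm_exp])
  then have "sm n UNIV (\<lambda>z. (1 / sqrt (2 * pi)) * exp ((- 1/2) * (z * z)))"
    by (rule sm_mult[OF open_UNIV sm_const])
  then show ?thesis by (simp add: phi_eq)
qed

definition Q :: "real \<Rightarrow> real" where
  "Q u = (LBINT z=ereal u..\<infinity>. phi z)"

lemma Q_alt: "Q u = (\<integral>z. indicator {u<..} z * phi z \<partial>lborel)"
  by (simp add: Q_def interval_lebesgue_integral_def set_lebesgue_integral_def)

lemma phi_ind_int: "A \<in> sets lborel \<Longrightarrow> integrable lborel (\<lambda>x. indicator A x * phi x)"
  using integrable_mult_indicator[of A lborel phi] by simp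

lemma phi_ili: "interval_lebesgue_integrable lborel a b phi"
  unfolding interval_lebesgue_integrable_def set_integrable_def
  using phi_ind_int by simp

lemma Q_split: "Q v = Q a - (LBINT z=ereal a..ereal v. phi z)"
proof -
  have "(LBINT z=ereal a..ereal v. phi z) + (LBINT z=ereal v..\<infinity>. phi z) = (LBINT z=ereal a..\<infinity>. phi z)"
    by (rule interval_integral_sum[OF phi_ili])
  then show ?thesis unfolding Q_def by simp
qed

lemma Q_deriv: "(Q has_real_derivative - phi u) (at u)"
proof -
  have c: "continuous_on {u-1..u+1} phi"
    unfolding phi_eq by (intro continuous_intros)
  have "((\<lambda>v. LBINT z=ereal (u-1)..ereal v. phi z) has_vector_derivative phi u) (at u within {u-1..u+1})"
    by (rule interval_integral_FTC2[OF _ _ c]) auto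
  then have "((\<lambda>v. LBINT z=ereal (u-1)..ereal v. phi z) has_real_derivative phi u) (at u)"
    using at_within_Icc_at[of "u-1" u "u+1"] has_real_derivative_iff_has_vector_derivative by auto
  then have "((\<lambda>v. Q (u-1) - (LBINT z=ereal (u-1)..ereal v. phi z)) has_real_derivative 0 - phi u) (at u)"
    by (rule DERIV_diff[OF DERIV_const])
  moreover have "(\<lambda>v. Q (u-1) - (LBINT z=ereal (u-1)..ereal v. phi z)) = Q"
    by (rule ext) (rule Q_split[symmetric])
  ultimately show ?thesis by simp
qed

lemma deriv_Q: "deriv Q = (\<lambda>u. - phi u)"
  by (rule ext) (rule DERIV_imp_deriv[OF Q_deriv])

lemma sm_Q: "sm n UNIV Q"
proof (cases n)
  case 0 then show ?thesis unfolding 0 sm_0 real_differentiable_def using Q_deriv by blast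
next
  case (Suc m)
  have "sm m UNIV (\<lambda>u. (-1) * phi u)" by (rule sm_mult[OF open_UNIV sm_const sm_phi])
  then have "sm m UNIV (deriv Q)" by (simp add: deriv_Q)
  then show ?thesis unfolding Suc sm_Suc real_differentiable_def using Q_deriv by blast
qed

lemma cont_Q: "continuous_on UNIV Q"
proof (rule continuous_at_imp_continuous_on, intro ballI)
  fix x show "isCont Q x" using Q_deriv[of x] by (rule DERIV_isCont)
qed

lemma meas_Q[measurable]: "Q \<in> borel_measurable borel"
  by (rule borel_measurable_continuous_onI[OF cont_Q])

lemma Q_nonneg: "0 \<le> Q u"
  unfolding Q_alt by (rule integral_nonneg_AE) (auto simp: indicator_def)

lemma Q_le1: "Q u \<le> 1"
proof -
  have "Q u \<le> (\<integral>z. phi z \<partial>lborel)" unfolding Q_alt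
    by (rule integral_mono[OF phi_ind_int[of "{u<..}"]]) (auto simp: indicator_def)
  then show ?thesis by simp
qed

lemma Q_pos: "0 < Q u"
proof -
  have "Q (u+1) < Q u"
  proof (rule DERIV_neg_imp_decreasing[of u "u+1" Q])
    fix x assume "u \<le> x" "x \<le> u + 1"
    show "\<exists>y. (Q has_real_derivative y) (at x) \<and> y < 0"
      using Q_deriv[of x] normal_density_pos[of 1 0 x] by auto
  qed simp
  then show ?thesis using Q_nonneg[of "u+1"] by linarith
qed

lemma Q_lim: "(Q \<longlongrightarrow> 0) at_top"
proof -
  have "((\<lambda>u. \<integral>z. indicator {u<..} z * phi z \<partial>lborel) \<longlongrightarrow> (\<integral>(z::real). (0::real) \<partial>lborel)) at_top"
  proof (rule integral_dominated_convergence_at_top[where f="\<lambda>z. 0::real" and M=lborel and s="\<lambda>u z. indicator {u<..} z * phi z" and w=phi])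
    show "AE x in lborel. ((\<lambda>i. indicator {i<..} x * phi x) \<longlongrightarrow> 0) at_top"
    proof (rule AE_I2)
      fix x
      have "eventually (\<lambda>i. indicator {i<..} x * phi x = (0::real)) at_top"
        using eventually_ge_at_top[of x] by eventually_elim (auto simp: indicator_def)
      then show "((\<lambda>i. indicator {i<..} x * phi x) \<longlongrightarrow> 0) at_top"
        by (rule tendsto_eventually)
    qed
    show "\<forall>\<^sub>F i in at_top. AE x in lborel. norm (indicator {i<..} x * phi x) \<le> phi x"
    proof (intro always_eventually allI AE_I2)
      fix i x show "norm (indicator {i<..} x * phi x) \<le> phi x"
        by (cases "x \<in> {i<..}") auto
    qed
    show "(\<lambda>z. 0::real) \<in> borel_measurable lborel" by simp
    show "integrable lborel phi" by (rule integrable_normal_density) simp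
    show "(\<lambda>z. indicator {t<..} z * phi z) \<in> borel_measurable lborel" for t
      by (rule borel_measurable_integrable[OF phi_ind_int]) simp
  qed
  moreover have eq: "Q = (\<lambda>u. \<integral>z. indicator {u<..} z * phi z \<partial>lborel)" by (rule ext) (rule Q_alt)
  ultimately show ?thesis unfolding integral_zero by (simp only:)
qed



lemma cont_bnd:
  fixes g :: "real \<Rightarrow> real"
  assumes "continuous_on UNIV g"
  shows "\<exists>M\<ge>0. \<forall>z. \<bar>z\<bar> \<le> R \<longrightarrow> \<bar>g z\<bar> \<le> M"
proof -
  have "compact (g ` {-R..R})"
    by (rule compact_continuous_image[OF continuous_on_subset[OF assms subset_UNIV]]) simp
  then have "bounded (g ` {-R..R})" by (rule compact_imp_bounded)
  then obtain M where M: "\<forall>y\<in>g ` {-R..R}. norm y \<le> M" by (auto simp: bounded_iff)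
  have "\<forall>z. \<bar>z\<bar> \<le> R \<longrightarrow> \<bar>g z\<bar> \<le> max M 0"
  proof (intro allI impI)
    fix z :: real assume "\<bar>z\<bar> \<le> R"
    then have "z \<in> {-R..R}" by auto
    then have "norm (g z) \<le> M" using M by blast
    then show "\<bar>g z\<bar> \<le> max M 0" by simp
  qed
  then show ?thesis by (intro exI[of _ "max M 0"]) auto
qed

lemma mvt_bnd:
  fixes h h' :: "real \<Rightarrow> real"
  assumes hd: "\<And>y. (h has_real_derivative h' y) (at y)"
    and M: "\<forall>z. \<bar>z\<bar> \<le> R \<longrightarrow> \<bar>h' z\<bar> \<le> M"
    and "\<bar>a\<bar> \<le> R" "\<bar>b\<bar> \<le> R"
  shows "\<bar>h a - h b\<bar> \<le> M * \<bar>a - b\<bar>"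
proof -
  have "norm (h a - h b) \<le> M * norm (a - b)"
  proof (rule field_differentiable_bound[of "{-R..R}" h h'])
    show "convex {-R..R}" by simp
    fix z assume "z \<in> {-R..R}"
    then show "(h has_field_derivative h' z) (at z within {-R..R})"
      using hd has_field_derivative_at_within by blast
    show "norm (h' z) \<le> M" using M \<open>z \<in> {-R..R}\<close> by auto
  qed (use assms in auto)
  then show ?thesis by simp
qed

lemma DC_at:
  fixes s :: "real \<Rightarrow> real \<Rightarrow> real" and f w :: "real \<Rightarrow> real"
  assumes meas: "\<And>t. s t \<in> borel_measurable lborel" "f \<in> borel_measurable lborel"
    and wi: "integrable lborel w"
    and lim: "\<And>y. ((\<lambda>t. s t y) \<longlongrightarrow> f y) (at x)"
    and bound: "eventually (\<lambda>t. \<forall>y. \<bar>s t y\<bar> \<le> w y) (at x)"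
  shows "((\<lambda>t. \<integral>y. s t y \<partial>lborel) \<longlongrightarrow> (\<integral>y. f y \<partial>lborel)) (at x)"
  unfolding tendsto_at_iff_sequentially
proof (intro allI impI)
  fix X :: "nat \<Rightarrow> real" assume X1: "\<forall>i. X i \<in> UNIV - {x}" and X2: "X \<longlonglongrightarrow> x"
  have F: "filterlim X (at x) sequentially"
    using X1 X2 by (auto simp: filterlim_at)
  from filterlim_iff[THEN iffD1, OF F, rule_format, OF bound]
  obtain N where N: "\<And>n. N \<le> n \<Longrightarrow> \<forall>y. \<bar>s (X n) y\<bar> \<le> w y"
    by (auto simp: eventually_sequentially)
  have F2: "filterlim (\<lambda>n. X (n + N)) (at x) sequentially"
    by (rule filterlim_compose[OF F filterlim_add_const_nat_at_top])
  have "(\<lambda>n. \<integral>y. s (X (n + N)) y \<partial>lborel) \<longlonglongrightarrow> (\<integral>y. f y \<partial>lborel)"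
  proof (rule integral_dominated_convergence[where w=w])
    show "AE y in lborel. (\<lambda>n. s (X (n + N)) y) \<longlonglongrightarrow> f y"
      by (rule AE_I2, rule filterlim_compose[OF lim F2])
    show "AE y in lborel. norm (s (X (n + N)) y) \<le> w y" for n
      using N[of "n+N"] by auto
  qed (use meas wi in auto)
  then show "((\<lambda>t. \<integral>y. s t y \<partial>lborel) \<circ> X) \<longlonglongrightarrow> (\<integral>y. f y \<partial>lborel)"
    unfolding o_def by (rule LIMSEQ_offset)
qed

definition I :: "(real \<Rightarrow> real) \<Rightarrow> (real \<Rightarrow> real) \<Rightarrow> (real \<Rightarrow> real) \<Rightarrow> real \<Rightarrow> real" where
  "I w c h t = (\<integral>y. w y * h (c y * t) \<partial>lborel)"

lemma I_integrable:
  fixes w c h :: "real \<Rightarrow> real"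
  assumes wi: "integrable lborel w" and cm: "c \<in> borel_measurable borel"
    and supp: "\<And>y. w y \<noteq> 0 \<Longrightarrow> \<bar>c y\<bar> \<le> B"
    and hc: "continuous_on UNIV h"
  shows "integrable lborel (\<lambda>y. w y * h (c y * t))"
proof -
  obtain M where M: "M \<ge> 0" "\<forall>z. \<bar>z\<bar> \<le> B * \<bar>t\<bar> \<longrightarrow> \<bar>h z\<bar> \<le> M"
    using cont_bnd[OF hc] by blast
  have hm: "h \<in> borel_measurable borel" by (rule borel_measurable_continuous_onI[OF hc])
  have wm: "w \<in> borel_measurable borel" using borel_measurable_integrable[OF wi] by simp
  show ?thesis
  proof (rule Bochner_Integration.integrable_bound[where f="\<lambda>y. M * w y"])
    show "integrable lborel (\<lambda>y. M * w y)" using wi by simp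
    show "(\<lambda>y. w y * h (c y * t)) \<in> borel_measurable lborel"
      using hm wm cm by measurable
    show "AE y in lborel. norm (w y * h (c y * t)) \<le> norm (M * w y)"
    proof (rule AE_I2)
      fix y
      show "norm (w y * h (c y * t)) \<le> norm (M * w y)"
      proof (cases "w y = 0")
        case False
        then have "\<bar>c y * t\<bar> \<le> B * \<bar>t\<bar>" using supp by (simp add: abs_mult mult_right_mono)
        then have "\<bar>h (c y * t)\<bar> \<le> M" using M by blast
        then have "\<bar>w y\<bar> * \<bar>h (c y * t)\<bar> \<le> \<bar>w y\<bar> * M" by (intro mult_left_mono) auto
        then show ?thesis using M(1) by (simp add: abs_mult mult.commute)
      qed simp
    qed
  qed
qed

lemma I_deriv:
  fixes w c h h' :: "real \<Rightarrow> real"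
  assumes wi: "integrable lborel w" and cm: "c \<in> borel_measurable borel"
    and supp: "\<And>y. w y \<noteq> 0 \<Longrightarrow> \<bar>c y\<bar> \<le> B"
    and hd: "\<And>y. (h has_real_derivative h' y) (at y)"
    and hc': "continuous_on UNIV h'"
  shows "(I w c h has_real_derivative I (\<lambda>y. w y * c y) c h' x) (at x)"
proof -
  have hc: "continuous_on UNIV h"
  proof (rule continuous_at_imp_continuous_on, intro ballI)
    fix z show "isCont h z" using hd[of z] by (rule DERIV_isCont)
  qed
  have hm: "h \<in> borel_measurable borel" by (rule borel_measurable_continuous_onI[OF hc])
  have hm': "h' \<in> borel_measurable borel" by (rule borel_measurable_continuous_onI[OF hc'])
  have wm: "w \<in> borel_measurable borel" using borel_measurable_integrable[OF wi] by simp
  obtain M where M: "M \<ge> 0" "\<forall>z. \<bar>z\<bar> \<le> B * (\<bar>x\<bar> + 1) \<longrightarrow> \<bar>h' z\<bar> \<le> M"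
    using cont_bnd[OF hc'] by blast
  define s where "s t y = w y * ((h (c y * t) - h (c y * x)) / (t - x))" for t y
  define f where "f y = w y * (h' (c y * x) * c y)" for y
  have int: "integrable lborel (\<lambda>y. w y * h (c y * t))" for t
    by (rule I_integrable[OF wi cm supp hc])
  have eq: "(I w c h t - I w c h x) / (t - x) = (\<integral>y. s t y \<partial>lborel)" for t
  proof -
    have "I w c h t - I w c h x = (\<integral>y. w y * h (c y * t) - w y * h (c y * x) \<partial>lborel)"
      unfolding I_def by (rule Bochner_Integration.integral_diff[OF int int, symmetric])
    then have "(I w c h t - I w c h x) / (t - x) = (\<integral>y. (w y * h (c y * t) - w y * h (c y * x)) / (t - x) \<partial>lborel)"
      by (simp add: integral_divide_zero)
    also have "\<dots> = (\<integral>y. s t y \<partial>lborel)"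
      unfolding s_def by (simp add: right_diff_distrib)
    finally show ?thesis .
  qed
  have lim: "((\<lambda>t. \<integral>y. s t y \<partial>lborel) \<longlongrightarrow> (\<integral>y. f y \<partial>lborel)) (at x)"
  proof (rule DC_at[where w="\<lambda>y. \<bar>w y\<bar> * (M * B)"])
    show "s t \<in> borel_measurable lborel" for t
      unfolding s_def[abs_def] using hm wm cm by measurable
    show "f \<in> borel_measurable lborel"
      unfolding f_def[abs_def] using hm' wm cm by measurable
    show "integrable lborel (\<lambda>y. \<bar>w y\<bar> * (M * B))"
      using wi by (intro integrable_mult_left integrable_abs)
    show "((\<lambda>t. s t y) \<longlongrightarrow> f y) (at x)" for y
    proof -
      have "((\<lambda>t. h (c y * t)) has_real_derivative h' (c y * x) * c y) (at x)"
        by (rule DERIV_chain2[OF hd]) (use DERIV_cmult[OF DERIV_ident, of "c y" x] in simp)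
      then have "((\<lambda>t. (h (c y * t) - h (c y * x)) / (t - x)) \<longlongrightarrow> h' (c y * x) * c y) (at x)"
        by (simp add: has_field_derivative_iff)
      then show ?thesis unfolding s_def f_def by (rule tendsto_mult_left)
    qed
    have bnd: "\<forall>y. \<bar>s t y\<bar> \<le> \<bar>w y\<bar> * (M * B)" if t: "dist t x < 1" for t
    proof
      fix y
      show "\<bar>s t y\<bar> \<le> \<bar>w y\<bar> * (M * B)"
      proof (cases "w y = 0")
        case False
        have cB: "\<bar>c y\<bar> \<le> B" using supp False by blast
        have tx: "\<bar>t\<bar> \<le> \<bar>x\<bar> + 1" using t by (simp add: dist_real_def)
        have a1: "\<bar>c y * t\<bar> \<le> B * (\<bar>x\<bar> + 1)"
          unfolding abs_mult by (rule mult_mono[OF cB tx]) (use cB in auto)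
        have a2: "\<bar>c y * x\<bar> \<le> B * (\<bar>x\<bar> + 1)"
          unfolding abs_mult by (rule mult_mono[OF cB]) (use cB in auto)
        have "\<bar>h (c y * t) - h (c y * x)\<bar> \<le> M * \<bar>c y * t - c y * x\<bar>"
          by (rule mvt_bnd[OF hd _ a1 a2]) (use M in blast)
        also have "\<dots> = M * \<bar>c y\<bar> * \<bar>t - x\<bar>" by (simp add: abs_mult right_diff_distrib[symmetric])
        also have "\<dots> \<le> M * B * \<bar>t - x\<bar>"
          by (intro mult_right_mono mult_left_mono cB M(1)) auto
        finally have hb: "\<bar>h (c y * t) - h (c y * x)\<bar> \<le> M * B * \<bar>t - x\<bar>" .
        have "\<bar>(h (c y * t) - h (c y * x)) / (t - x)\<bar> \<le> M * B"
        proof (cases "t = x")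
          case True then show ?thesis using M(1) cB by simp
        next
          case False
          then show ?thesis using hb by (simp add: abs_divide divide_le_eq)
        qed
        then show ?thesis unfolding s_def abs_mult by (intro mult_left_mono) auto
      qed (simp add: s_def)
    qed
    show "eventually (\<lambda>t. \<forall>y. \<bar>s t y\<bar> \<le> \<bar>w y\<bar> * (M * B)) (at x)"
      unfolding eventually_at by (rule exI[of _ 1]) (use bnd in auto)
  qed
  have "I (\<lambda>y. w y * c y) c h' x = (\<integral>y. f y \<partial>lborel)"
    unfolding I_def f_def by (simp add: mult_ac)
  then show ?thesis unfolding has_field_derivative_iff eq using lim by simp
qed



lemma sm_UNIV_deriv:
  assumes "\<And>n. sm n UNIV h"
  shows "((deriv ^^ k) h has_real_derivative (deriv ^^ Suc k) h y) (at y)"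
proof -
  have "(deriv ^^ k) h differentiable (at y)" using assms[of k] unfolding sm_def by auto
  then show ?thesis by (simp add: DERIV_deriv_iff_real_differentiable)
qed

lemma sm_UNIV_cont:
  assumes "\<And>n. sm n UNIV h"
  shows "continuous_on UNIV ((deriv ^^ k) h)"
proof (rule continuous_at_imp_continuous_on, intro ballI)
  fix z show "isCont ((deriv ^^ k) h) z" using sm_UNIV_deriv[OF assms, of k z] by (rule DERIV_isCont)
qed

lemma wc_integrable:
  fixes w c :: "real \<Rightarrow> real"
  assumes wi: "integrable lborel w" and cm: "c \<in> borel_measurable borel"
    and supp: "\<And>y. w y \<noteq> 0 \<Longrightarrow> \<bar>c y\<bar> \<le> B"
  shows "integrable lborel (\<lambda>y. w y * c y ^ k)"
proof (rule Bochner_Integration.integrable_bound[where f="\<lambda>y. B ^ k * w y"])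
  show "integrable lborel (\<lambda>y. B ^ k * w y)" using wi by simp
  have wm: "w \<in> borel_measurable borel" using borel_measurable_integrable[OF wi] by simp
  show "(\<lambda>y. w y * c y ^ k) \<in> borel_measurable lborel" using wm cm by measurable
  show "AE y in lborel. norm (w y * c y ^ k) \<le> norm (B ^ k * w y)"
  proof (rule AE_I2)
    fix y show "norm (w y * c y ^ k) \<le> norm (B ^ k * w y)"
    proof (cases "w y = 0")
      case False
      then have cB: "\<bar>c y\<bar> \<le> B" using supp by blast
      then have "\<bar>c y\<bar> ^ k \<le> \<bar>B\<bar> ^ k" by (intro power_mono) auto
      then have "\<bar>w y\<bar> * \<bar>c y\<bar> ^ k \<le> \<bar>w y\<bar> * \<bar>B\<bar> ^ k" by (intro mult_left_mono) auto
      then show ?thesis by (simp add: abs_mult power_abs mult.commute)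
    qed simp
  qed
qed

lemma I_iter:
  fixes w c h :: "real \<Rightarrow> real"
  assumes wi: "integrable lborel w" and cm: "c \<in> borel_measurable borel"
    and supp: "\<And>y. w y \<noteq> 0 \<Longrightarrow> \<bar>c y\<bar> \<le> B"
    and hs: "\<And>n. sm n UNIV h"
  shows "(deriv ^^ k) (I w c h) = I (\<lambda>y. w y * c y ^ k) c ((deriv ^^ k) h)"
proof (induction k)
  case 0 then show ?case by simp
next
  case (Suc k)
  have wk: "integrable lborel (\<lambda>y. w y * c y ^ k)" by (rule wc_integrable[OF wi cm supp])
  have suppk: "\<bar>c y\<bar> \<le> B" if "w y * c y ^ k \<noteq> 0" for y using supp that by auto
  have d: "(I (\<lambda>y. w y * c y ^ k) c ((deriv ^^ k) h) has_real_derivative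
        I (\<lambda>y. w y * c y ^ k * c y) c ((deriv ^^ Suc k) h) x) (at x)" for x
    by (rule I_deriv[OF wk cm suppk sm_UNIV_deriv[OF hs] sm_UNIV_cont[OF hs]])
  have "(deriv ^^ Suc k) (I w c h) = deriv (I (\<lambda>y. w y * c y ^ k) c ((deriv ^^ k) h))"
    using Suc.IH by simp
  also have "\<dots> = I (\<lambda>y. w y * c y ^ k * c y) c ((deriv ^^ Suc k) h)"
    by (rule ext) (rule DERIV_imp_deriv[OF d])
  also have "(\<lambda>y. w y * c y ^ k * c y) = (\<lambda>y. w y * c y ^ Suc k)"
    by (rule ext) (simp add: mult_ac)
  finally show ?case .
qed

lemma sm_I:
  fixes w c h :: "real \<Rightarrow> real"
  assumes wi: "integrable lborel w" and cm: "c \<in> borel_measurable borel"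
    and supp: "\<And>y. w y \<noteq> 0 \<Longrightarrow> \<bar>c y\<bar> \<le> B"
    and hs: "\<And>n. sm n UNIV h"
  shows "sm n UNIV (I w c h)"
  unfolding sm_def
proof (intro allI impI ballI)
  fix k x
  have wk: "integrable lborel (\<lambda>y. w y * c y ^ k)" by (rule wc_integrable[OF wi cm supp])
  have suppk: "\<bar>c y\<bar> \<le> B" if "w y * c y ^ k \<noteq> 0" for y using supp that by auto
  have "(I (\<lambda>y. w y * c y ^ k) c ((deriv ^^ k) h) has_real_derivative
        I (\<lambda>y. w y * c y ^ k * c y) c ((deriv ^^ Suc k) h) x) (at x)"
    by (rule I_deriv[OF wk cm suppk sm_UNIV_deriv[OF hs] sm_UNIV_cont[OF hs]])
  moreover have eq: "(deriv ^^ k) (I w c h) = I (\<lambda>y. w y * c y ^ k) c ((deriv ^^ k) h)"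
    by (rule I_iter[OF wi cm supp hs])
  ultimately show "(deriv ^^ k) (I w c h) differentiable (at x)"
    unfolding real_differentiable_def by metis
qed



lemma gauss_nd: "\<eta> > 0 \<Longrightarrow> gauss \<eta> (\<sigma> - s) = normal_density s \<eta> \<sigma>"
  unfolding gauss_def normal_density_def by (simp add: real_sqrt_mult)

lemma nd_affine: "\<eta> > 0 \<Longrightarrow> normal_density s \<eta> (s + \<eta> * z) = phi z / \<eta>"
  unfolding normal_density_def std_normal_density_def
  by (simp add: real_sqrt_mult power_mult_distrib)

lemma phi_neg: "phi (- z) = phi z"
  unfolding std_normal_density_def by simp

lemma half1:
  assumes "\<eta> > 0"
  shows "(\<integral>\<sigma>. indicator {1<..} \<sigma> * normal_density s \<eta> \<sigma> \<partial>lborel) = Q ((1 - s) / \<eta>)"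
proof -
  have "(\<integral>\<sigma>. indicator {1<..} \<sigma> * normal_density s \<eta> \<sigma> \<partial>lborel)
      = \<bar>\<eta>\<bar> *\<^sub>R (\<integral>z. indicator {1<..} (s + \<eta> * z) * normal_density s \<eta> (s + \<eta> * z) \<partial>lborel)"
    by (rule lborel_integral_real_affine) (use assms in simp)
  also have "(\<lambda>z. indicator {1<..} (s + \<eta> * z) * normal_density s \<eta> (s + \<eta> * z))
      = (\<lambda>z. (indicator {(1 - s) / \<eta><..} z * phi z) / \<eta>)"
  proof (rule ext)
    fix z
    have "(1 < s + \<eta> * z) \<longleftrightarrow> ((1 - s) / \<eta> < z)" using assms by (simp add: pos_divide_less_eq algebra_simps)
    then show "indicator {1<..} (s + \<eta> * z) * normal_density s \<eta> (s + \<eta> * z)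
      = (indicator {(1 - s) / \<eta><..} z * phi z) / \<eta>"
      using nd_affine[OF assms] by (simp add: indicator_def)
  qed
  also have "\<bar>\<eta>\<bar> *\<^sub>R (\<integral>z. (indicator {(1 - s) / \<eta><..} z * phi z) / \<eta> \<partial>lborel)
      = (\<integral>z. indicator {(1 - s) / \<eta><..} z * phi z \<partial>lborel)"
    using assms by (simp add: integral_divide_zero)
  finally show ?thesis by (simp add: Q_alt)
qed

lemma half2:
  assumes "\<eta> > 0"
  shows "(\<integral>\<sigma>. indicator {..< -1} \<sigma> * normal_density s \<eta> \<sigma> \<partial>lborel) = Q ((1 + s) / \<eta>)"
proof -
  have "(\<integral>\<sigma>. indicator {..< -1} \<sigma> * normal_density s \<eta> \<sigma> \<partial>lborel)
      = \<bar>- \<eta>\<bar> *\<^sub>R (\<integral>z. indicator {..< -1} (s + (- \<eta>) * z) * normal_density s \<eta> (s + (- \<eta>) * z) \<partial>lborel)"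
    by (rule lborel_integral_real_affine) (use assms in simp)
  also have "(\<lambda>z. indicator {..< -1} (s + (- \<eta>) * z) * normal_density s \<eta> (s + (- \<eta>) * z))
      = (\<lambda>z. (indicator {(1 + s) / \<eta><..} z * phi z) / \<eta>)"
  proof (rule ext)
    fix z
    have "(s + (- \<eta>) * z < -1) \<longleftrightarrow> ((1 + s) / \<eta> < z)" using assms by (simp add: pos_divide_less_eq algebra_simps)
    moreover have "normal_density s \<eta> (s + (- \<eta>) * z) = phi z / \<eta>"
      using nd_affine[OF assms, of s "- z"] phi_neg[of z] by simp
    ultimately show "indicator {..< -1} (s + (- \<eta>) * z) * normal_density s \<eta> (s + (- \<eta>) * z)
      = (indicator {(1 + s) / \<eta><..} z * phi z) / \<eta>"
      by (simp add: indicator_def)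
  qed
  also have "\<bar>- \<eta>\<bar> *\<^sub>R (\<integral>z. (indicator {(1 + s) / \<eta><..} z * phi z) / \<eta> \<partial>lborel)
      = (\<integral>z. indicator {(1 + s) / \<eta><..} z * phi z \<partial>lborel)"
    using assms by (simp add: integral_divide_zero)
  finally show ?thesis by (simp add: Q_alt)
qed

definition Aset :: "real set" where "Aset = {\<sigma>. 1 < \<bar>\<sigma>\<bar>}"

lemma Aset_eq: "indicator Aset \<sigma> = (indicator {1<..} \<sigma> + indicator {..< -1} \<sigma> :: real)"
  by (auto simp: Aset_def indicator_def)

lemma Aset_meas[measurable]: "Aset \<in> sets borel"
proof -
  have "Aset = {1<..} \<union> {..< -1}" by (auto simp: Aset_def)
  show ?thesis unfolding \<open>Aset = _\<close> by (intro sets.Un borel_open) auto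
qed

lemma nd_int: "\<eta> > 0 \<Longrightarrow> integrable lborel (normal_density s \<eta>)"
  by (rule integrable_normal_density) simp

lemma nd_ind_int: "A \<in> sets borel \<Longrightarrow> \<eta> > 0 \<Longrightarrow> integrable lborel (\<lambda>x. indicator A x * normal_density s \<eta> x)"
  using integrable_mult_indicator[of A lborel "normal_density s \<eta>"] nd_int[of \<eta> s] by simp

lemma G_eq:
  assumes "\<eta> > 0"
  shows "(\<integral>\<sigma>. indicator Aset \<sigma> * normal_density s \<eta> \<sigma> \<partial>lborel) = Q ((1 - s) / \<eta>) + Q ((1 + s) / \<eta>)"
proof -
  have "(\<integral>\<sigma>. indicator Aset \<sigma> * normal_density s \<eta> \<sigma> \<partial>lborel)
     = (\<integral>\<sigma>. indicator {1<..} \<sigma> * normal_density s \<eta> \<sigma> + indicator {..< -1} \<sigma> * normal_density s \<eta> \<sigma> \<partial>lborel)"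
    by (simp add: Aset_eq distrib_right)
  also have "\<dots> = (\<integral>\<sigma>. indicator {1<..} \<sigma> * normal_density s \<eta> \<sigma> \<partial>lborel) + (\<integral>\<sigma>. indicator {..< -1} \<sigma> * normal_density s \<eta> \<sigma> \<partial>lborel)"
    by (rule Bochner_Integration.integral_add) (simp_all add: nd_ind_int assms)
  finally show ?thesis using half1[OF assms] half2[OF assms] by simp
qed



definition G :: "real \<Rightarrow> real \<Rightarrow> real" where
  "G t s = Q ((1 - s) * t) + Q ((1 + s) * t)"

lemma G_nonneg: "0 \<le> G t s" unfolding G_def using Q_nonneg[of "(1 - s) * t"] Q_nonneg[of "(1 + s) * t"] by simp
lemma G_le2: "G t s \<le> 2" unfolding G_def using Q_le1[of "(1 - s) * t"] Q_le1[of "(1 + s) * t"] by simp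
lemma G_meas[measurable]: "G t \<in> borel_measurable borel" unfolding G_def[abs_def] by measurable

lemma G_eq2: "\<eta> > 0 \<Longrightarrow> (\<integral>\<sigma>. indicator Aset \<sigma> * normal_density s \<eta> \<sigma> \<partial>lborel) = G (1 / \<eta>) s"
  unfolding G_eq G_def by simp

lemma F_repr:
  fixes p0 :: "real \<Rightarrow> real"
  assumes p0i: "integrable lborel p0" and x: "x > 0"
  shows "F_fun \<alpha> p0 x = \<alpha> * (\<integral>s. p0 s * G (1 / sqrt (2 * x)) s \<partial>lborel)"
proof -
  define \<eta> where "\<eta> = sqrt (2 * x)"
  have eta: "\<eta> > 0" using x by (simp add: \<eta>_def)
  have p0m[measurable]: "p0 \<in> borel_measurable borel" using borel_measurable_integrable[OF p0i] by simp
  define f where "f s \<sigma> = indicator Aset \<sigma> * p0 s * normal_density s \<eta> \<sigma>" for s \<sigma>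
  have nd_phi: "normal_density s \<eta> \<sigma> = phi ((\<sigma> - s) / \<eta>) / \<eta>" for s \<sigma>
    using nd_affine[OF eta, of s "(\<sigma> - s) / \<eta>"] eta by simp
  have eqf: "case_prod f = (\<lambda>p. indicator Aset (snd p) * p0 (fst p) * (phi ((snd p - fst p) / \<eta>) / \<eta>))"
    by (rule ext) (simp add: f_def nd_phi split: prod.split)
  have "(\<lambda>p. indicator Aset (snd p) * p0 (fst p) * (phi ((snd p - fst p) / \<eta>) / \<eta>)) \<in> borel_measurable (lborel \<Otimes>\<^sub>M lborel)"
    by measurable
  then have fm: "case_prod f \<in> borel_measurable (lborel \<Otimes>\<^sub>M lborel)" by (simp only: eqf)
  have inner: "(\<integral>\<sigma>. f s \<sigma> \<partial>lborel) = p0 s * G (1 / \<eta>) s" for s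
  proof -
    have "(\<integral>\<sigma>. f s \<sigma> \<partial>lborel) = (\<integral>\<sigma>. p0 s * (indicator Aset \<sigma> * normal_density s \<eta> \<sigma>) \<partial>lborel)"
      unfolding f_def by (rule Bochner_Integration.integral_cong) (simp_all add: mult_ac)
    also have "\<dots> = p0 s * (\<integral>\<sigma>. indicator Aset \<sigma> * normal_density s \<eta> \<sigma> \<partial>lborel)"
      by (rule integral_mult_right_zero)
    finally show ?thesis using G_eq2[OF eta] by simp
  qed
  have innern: "(\<integral>\<sigma>. norm (f s \<sigma>) \<partial>lborel) = \<bar>p0 s\<bar> * G (1 / \<eta>) s" for s
  proof -
    have "(\<integral>\<sigma>. norm (f s \<sigma>) \<partial>lborel) = (\<integral>\<sigma>. \<bar>p0 s\<bar> * (indicator Aset \<sigma> * normal_density s \<eta> \<sigma>) \<partial>lborel)"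
      unfolding f_def by (rule Bochner_Integration.integral_cong) (simp_all add: abs_mult)
    also have "\<dots> = \<bar>p0 s\<bar> * (\<integral>\<sigma>. indicator Aset \<sigma> * normal_density s \<eta> \<sigma> \<partial>lborel)"
      by (rule integral_mult_right_zero)
    finally show ?thesis using G_eq2[OF eta] by simp
  qed
  have fi: "integrable (lborel \<Otimes>\<^sub>M lborel) (case_prod f)"
  proof (rule lborel_pair.Fubini_integrable)
    show "case_prod f \<in> borel_measurable (lborel \<Otimes>\<^sub>M lborel)" by (rule fm)
    show "integrable lborel (\<lambda>s. \<integral>\<sigma>. norm (case_prod f (s, \<sigma>)) \<partial>lborel)"
      unfolding case_prod_conv innern
    proof (rule Bochner_Integration.integrable_bound[where f="\<lambda>s. 2 * p0 s"])
      show "integrable lborel (\<lambda>s. 2 * p0 s)" using p0i by simp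
      show "(\<lambda>s. \<bar>p0 s\<bar> * G (1 / \<eta>) s) \<in> borel_measurable lborel" by measurable
      show "AE s in lborel. norm (\<bar>p0 s\<bar> * G (1 / \<eta>) s) \<le> norm (2 * p0 s)"
      proof (rule AE_I2)
        fix s
        have "\<bar>p0 s\<bar> * G (1 / \<eta>) s \<le> \<bar>p0 s\<bar> * 2" by (rule mult_left_mono[OF G_le2]) simp
        then show "norm (\<bar>p0 s\<bar> * G (1 / \<eta>) s) \<le> norm (2 * p0 s)"
          using G_nonneg[of "1/\<eta>" s] by (simp add: abs_mult)
      qed
    qed
    show "AE s in lborel. integrable lborel (\<lambda>\<sigma>. case_prod f (s, \<sigma>))"
    proof (rule AE_I2)
      fix s
      have "integrable lborel (\<lambda>\<sigma>. p0 s * (indicator Aset \<sigma> * normal_density s \<eta> \<sigma>))"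
        by (rule integrable_mult_right) (rule nd_ind_int[OF Aset_meas eta])
      then show "integrable lborel (\<lambda>\<sigma>. case_prod f (s, \<sigma>))"
        unfolding f_def by (simp add: mult_ac)
    qed
  qed
  have "F_fun \<alpha> p0 x = \<alpha> * (\<integral>\<sigma>. indicator Aset \<sigma> * (\<integral>s. p0 s * normal_density s \<eta> \<sigma> \<partial>lborel) \<partial>lborel)"
  proof -
    have "\<And>\<sigma> s. gauss \<eta> (\<sigma> - s) = normal_density s \<eta> \<sigma>" using gauss_nd[OF eta] by blast
    moreover have "{\<sigma>. 1 < \<bar>\<sigma>\<bar>} = Aset" by (simp add: Aset_def)
    ultimately show ?thesis
      using x unfolding F_fun_def set_lebesgue_integral_def \<eta>_def by simp
  qed
  also have "(\<lambda>\<sigma>. indicator Aset \<sigma> * (\<integral>s. p0 s * normal_density s \<eta> \<sigma> \<partial>lborel)) = (\<lambda>\<sigma>. \<integral>s. f s \<sigma> \<partial>lborel)"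
    unfolding f_def
  proof (rule ext)
    fix \<sigma>
    have "indicator Aset \<sigma> * (\<integral>s. p0 s * normal_density s \<eta> \<sigma> \<partial>lborel) = (\<integral>s. indicator Aset \<sigma> * (p0 s * normal_density s \<eta> \<sigma>) \<partial>lborel)"
      by (rule integral_mult_right_zero[symmetric])
    then show "indicator Aset \<sigma> * (\<integral>s. p0 s * normal_density s \<eta> \<sigma> \<partial>lborel) = (\<integral>s. indicator Aset \<sigma> * p0 s * normal_density s \<eta> \<sigma> \<partial>lborel)"
      by (simp only: mult.assoc)
  qed
  also have "(\<integral>\<sigma>. (\<integral>s. f s \<sigma> \<partial>lborel) \<partial>lborel) = (\<integral>s. (\<integral>\<sigma>. f s \<sigma> \<partial>lborel) \<partial>lborel)"
    by (rule lborel_pair.Fubini_integral[OF fi])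
  also have "\<dots> = (\<integral>s. p0 s * G (1 / \<eta>) s \<partial>lborel)" unfolding inner ..
  finally show ?thesis unfolding \<eta>_def .
qed



lemma pos_int:
  fixes p k :: "real \<Rightarrow> real"
  assumes pi: "integrable lborel p" and nn: "AE s in lborel. 0 \<le> p s"
    and kpos: "\<And>s. p s \<noteq> 0 \<Longrightarrow> k s > 0" and one: "(\<integral>s. p s \<partial>lborel) = 1"
    and pki: "integrable lborel (\<lambda>s. p s * k s)"
  shows "(\<integral>s. p s * k s \<partial>lborel) > 0"
proof -
  have nn2: "AE s in lborel. 0 \<le> p s * k s"
    using nn
  proof eventually_elim
    fix s assume "0 \<le> p s"
    then show "0 \<le> p s * k s" using kpos[of s] by (cases "p s = 0") auto
  qed
  have ge: "(\<integral>s. p s * k s \<partial>lborel) \<ge> 0" by (rule integral_nonneg_AE[OF nn2])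
  have "(\<integral>s. p s * k s \<partial>lborel) \<noteq> 0"
  proof
    assume "(\<integral>s. p s * k s \<partial>lborel) = 0"
    then have "AE s in lborel. p s * k s = 0" using integral_nonneg_eq_0_iff_AE[OF pki nn2] by blast
    then have "AE s in lborel. p s = 0"
    proof eventually_elim
      fix s assume "p s * k s = 0" then show "p s = 0" using kpos[of s] by (cases "p s = 0") auto
    qed
    then have "(\<integral>s. p s \<partial>lborel) = 0" by (simp add: integral_eq_zero_AE)
    then show False using one by simp
  qed
  then show ?thesis using ge by linarith
qed

lemma tau_lim: "filterlim (\<lambda>x::real. (1 / sqrt 2) * x powr (- 1 / 2)) at_top (at_right 0)"
  by real_asymp

lemma tau_eq: "x > 0 \<Longrightarrow> 1 / sqrt (2 * x) = (1 / sqrt 2) * x powr (- 1 / 2)"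
  by (simp add: powr_minus_divide powr_half_sqrt real_sqrt_mult)

lemma tau_deriv: "x > 0 \<Longrightarrow> ((\<lambda>x. (1 / sqrt 2) * x powr (- 1 / 2)) has_real_derivative (1 / sqrt 2) * ((- 1 / 2) * x powr (- 1 / 2 - 1))) (at x)"
  by (rule DERIV_cmult[OF has_real_derivative_powr])

lemma sm_tau: "sm n {0<..} (\<lambda>x. (1 / sqrt 2) * x powr (- 1 / 2))"
  by (rule sm_mult[OF open_greaterThan sm_const sm_powr])



theorem lemma4p1:
  fixes \<alpha> :: real and p0 :: "real \<Rightarrow> real"
  assumes "\<alpha> > 0"
    and "integrable lborel p0"
    and "\<exists>M. AE x in lborel. \<bar>p0 x\<bar> \<le> M"
    and "AE x in lborel. p0 x \<ge> 0"
    and "(LINT x|lborel. p0 x) = 1"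
    and "D_fun \<alpha> p0 = 0"
  shows "continuous_on {0..} (F_fun \<alpha> p0)
    \<and> smooth_on_open {0<..} (F_fun \<alpha> p0)
    \<and> (\<forall>x>0. F_fun \<alpha> p0 x > 0)
    \<and> (\<forall>x>0. deriv (F_fun \<alpha> p0) x > 0)"
proof -
  note p0i = assms(2)
  have p0m[measurable]: "p0 \<in> borel_measurable borel" using borel_measurable_integrable[OF p0i] by simp
  define p1 where "p1 s = indicator {-1<..<1} s * p0 s" for s
  have p1m[measurable]: "p1 \<in> borel_measurable borel" unfolding p1_def[abs_def] by measurable
  have p1i: "integrable lborel p1"
    unfolding p1_def[abs_def] using integrable_mult_indicator[OF _ p0i, of "{-1<..<1}"] by simp
  have supp0: "-1 < s \<and> s < 1" if "p1 s \<noteq> 0" for s using that by (auto simp: p1_def indicator_def)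
  have supp1: "\<bar>1 - s\<bar> \<le> 2" if "p1 s \<noteq> 0" for s using supp0[OF that] by auto
  have supp2: "\<bar>1 + s\<bar> \<le> 2" if "p1 s \<noteq> 0" for s using supp0[OF that] by auto
  have c1m: "(\<lambda>s::real. 1 - s) \<in> borel_measurable borel" by measurable
  have c2m: "(\<lambda>s::real. 1 + s) \<in> borel_measurable borel" by measurable
  have "(\<integral>\<sigma>. indicator Aset \<sigma> * p0 \<sigma> \<partial>lborel) = 0"
  proof -
    have "\<alpha> * (\<integral>\<sigma>. indicator Aset \<sigma> * p0 \<sigma> \<partial>lborel) = 0"
      using assms(6) unfolding D_fun_def set_lebesgue_integral_def Aset_def by simp
    then show ?thesis using assms(1) by simp
  qed
  moreover have iAi: "integrable lborel (\<lambda>\<sigma>. indicator Aset \<sigma> * p0 \<sigma>)"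
    using integrable_mult_indicator[OF _ p0i, of Aset] by simp
  moreover have "AE \<sigma> in lborel. 0 \<le> indicator Aset \<sigma> * p0 \<sigma>"
    using assms(4) by eventually_elim (simp add: indicator_def)
  ultimately have AE0: "AE \<sigma> in lborel. indicator Aset \<sigma> * p0 \<sigma> = 0"
    using integral_nonneg_eq_0_iff_AE by blast
  have AEeq: "AE s in lborel. p0 s = p1 s"
    using AE0 AE_lborel_singleton[of 1] AE_lborel_singleton[of "-1"]
  proof eventually_elim
    fix s :: real assume a: "indicator Aset s * p0 s = 0" "s \<noteq> 1" "s \<noteq> -1"
    show "p0 s = p1 s"
    proof (cases "-1 < s \<and> s < 1")
      case True then show ?thesis by (simp add: p1_def indicator_def)
    next
      case False
      then have "s \<in> Aset" using a(2,3) by (auto simp: Aset_def)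
      then show ?thesis using a(1) False by (simp add: p1_def indicator_def)
    qed
  qed
  have p1nn: "AE s in lborel. 0 \<le> p1 s"
    using assms(4) by eventually_elim (simp add: p1_def indicator_def)
  have p1one: "(\<integral>s. p1 s \<partial>lborel) = 1"
  proof -
    have a: "p0 \<in> borel_measurable lborel" using p0m by simp
    have b: "p1 \<in> borel_measurable lborel" using p1m by simp
    show ?thesis using integral_cong_AE[OF a b AEeq] assms(5) by simp
  qed
  define H where "H t = I p1 (\<lambda>s. 1 - s) Q t + I p1 (\<lambda>s. 1 + s) Q t" for t
  have int1: "integrable lborel (\<lambda>s. p1 s * Q ((1 - s) * t))" for t
    using I_integrable[OF p1i c1m supp1 cont_Q] by simp
  have int2: "integrable lborel (\<lambda>s. p1 s * Q ((1 + s) * t))" for t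
    using I_integrable[OF p1i c2m supp2 cont_Q] by simp
  have pGi: "integrable lborel (\<lambda>s. p1 s * G t s)" for t
    unfolding G_def distrib_left by (rule Bochner_Integration.integrable_add[OF int1 int2])
  have Hint1: "(\<integral>s. p1 s * G t s \<partial>lborel) = H t" for t
  proof -
    have "(\<integral>s. p1 s * G t s \<partial>lborel) = (\<integral>s. p1 s * Q ((1 - s) * t) + p1 s * Q ((1 + s) * t) \<partial>lborel)"
      unfolding G_def distrib_left ..
    also have "\<dots> = (\<integral>s. p1 s * Q ((1 - s) * t) \<partial>lborel) + (\<integral>s. p1 s * Q ((1 + s) * t) \<partial>lborel)"
      by (rule Bochner_Integration.integral_add[OF int1 int2])
    finally show ?thesis unfolding H_def I_def .
  qed
  have Hint: "(\<integral>s. p0 s * G t s \<partial>lborel) = H t" for t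
  proof -
    have "(\<integral>s. p0 s * G t s \<partial>lborel) = (\<integral>s. p1 s * G t s \<partial>lborel)"
    proof (rule integral_cong_AE)
      show "(\<lambda>s. p0 s * G t s) \<in> borel_measurable lborel" by measurable
      show "(\<lambda>s. p1 s * G t s) \<in> borel_measurable lborel" by measurable
      show "AE s in lborel. p0 s * G t s = p1 s * G t s" using AEeq by eventually_elim simp
    qed
    then show ?thesis using Hint1 by simp
  qed
  define \<tau> where "\<tau> x = (1 / sqrt 2) * x powr (- 1 / 2)" for x :: real
  have Frep: "F_fun \<alpha> p0 x = \<alpha> * H (\<tau> x)" if "x > 0" for x
    using F_repr[OF p0i that, of \<alpha>] Hint tau_eq[OF that] by (simp add: \<tau>_def)
  have Heq: "H = (\<lambda>t. I p1 (\<lambda>s. 1 - s) Q t + I p1 (\<lambda>s. 1 + s) Q t)" by (rule ext) (simp add: H_def)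
  have smH: "sm n UNIV H" for n
    unfolding Heq by (rule sm_add[OF open_UNIV sm_I[OF p1i c1m supp1 sm_Q] sm_I[OF p1i c2m supp2 sm_Q]])
  have smtau: "sm n {0<..} \<tau>" for n
    unfolding \<tau>_def[abs_def] by (rule sm_tau)
  have smF: "sm n {0<..} (F_fun \<alpha> p0)" for n
  proof -
    have "sm n {0<..} (\<lambda>x. H (\<tau> x))" by (rule sm_comp[OF open_greaterThan open_UNIV subset_UNIV smH smtau])
    then have s1: "sm n {0<..} (\<lambda>x. \<alpha> * H (\<tau> x))" by (rule sm_mult[OF open_greaterThan sm_const])
    have e: "\<forall>x\<in>{0<..}. \<alpha> * H (\<tau> x) = F_fun \<alpha> p0 x"
    proof
      fix x :: real assume "x \<in> {0<..}"
      then have "x > 0" by simp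
      then show "\<alpha> * H (\<tau> x) = F_fun \<alpha> p0 x" by (rule Frep[symmetric])
    qed
    show ?thesis by (rule sm_cong[OF open_greaterThan e s1])
  qed
  have smooth: "smooth_on_open {0<..} (F_fun \<alpha> p0)"
    unfolding smooth_on_open_def using smF unfolding sm_def by blast
  have Hpos: "H t > 0" for t
  proof -
    have "(\<integral>s. p1 s * G t s \<partial>lborel) > 0"
    proof (rule pos_int[OF p1i p1nn _ p1one pGi])
      fix s show "G t s > 0" unfolding G_def using Q_pos[of "(1 - s) * t"] Q_pos[of "(1 + s) * t"] by simp
    qed
    then show ?thesis using Hint1 by simp
  qed
  have Fpos: "\<forall>x>0. F_fun \<alpha> p0 x > 0"
    using Frep Hpos assms(1) by simp
  have cnphi: "continuous_on UNIV (\<lambda>u. - phi u)" unfolding phi_eq by (intro continuous_intros)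
  define H' where "H' t = I (\<lambda>s. p1 s * (1 - s)) (\<lambda>s. 1 - s) (\<lambda>u. - phi u) t
      + I (\<lambda>s. p1 s * (1 + s)) (\<lambda>s. 1 + s) (\<lambda>u. - phi u) t" for t
  have Hd: "(H has_real_derivative H' t) (at t)" for t
  proof -
    have "((\<lambda>t. I p1 (\<lambda>s. 1 - s) Q t + I p1 (\<lambda>s. 1 + s) Q t) has_real_derivative H' t) (at t)"
      unfolding H'_def
      by (rule DERIV_add[OF I_deriv[OF p1i c1m supp1 Q_deriv cnphi] I_deriv[OF p1i c2m supp2 Q_deriv cnphi]])
    then show ?thesis unfolding Heq .
  qed
  have H'neg: "H' t < 0" for t
  proof -
    have w1: "integrable lborel (\<lambda>s. p1 s * (1 - s))" using wc_integrable[OF p1i c1m supp1, of 1] by simp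
    have w2: "integrable lborel (\<lambda>s. p1 s * (1 + s))" using wc_integrable[OF p1i c2m supp2, of 1] by simp
    have cphi: "continuous_on UNIV phi" unfolding phi_eq by (intro continuous_intros)
    have s1: "\<bar>1 - s\<bar> \<le> 2" if "p1 s * (1 - s) \<noteq> 0" for s using supp1 that by auto
    have s2: "\<bar>1 + s\<bar> \<le> 2" if "p1 s * (1 + s) \<noteq> 0" for s using supp2 that by auto
    have i1: "integrable lborel (\<lambda>s. p1 s * (1 - s) * phi ((1 - s) * t))"
      using I_integrable[OF w1 c1m s1 cphi] by simp
    have i2: "integrable lborel (\<lambda>s. p1 s * (1 + s) * phi ((1 + s) * t))"
      using I_integrable[OF w2 c2m s2 cphi] by simp
    define k where "k s = (1 - s) * phi ((1 - s) * t) + (1 + s) * phi ((1 + s) * t)" for s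
    have eqk: "(\<lambda>s. p1 s * k s) = (\<lambda>s. p1 s * (1 - s) * phi ((1 - s) * t) + p1 s * (1 + s) * phi ((1 + s) * t))"
      by (rule ext) (simp add: k_def algebra_simps)
    have pki: "integrable lborel (\<lambda>s. p1 s * k s)"
      unfolding eqk by (rule Bochner_Integration.integrable_add[OF i1 i2])
    have kpos: "k s > 0" if "p1 s \<noteq> 0" for s
    proof -
      have "-1 < s" "s < 1" using supp0[OF that] by auto
      then have "(1 - s) * phi ((1 - s) * t) > 0" "(1 + s) * phi ((1 + s) * t) > 0"
        using normal_density_pos[of 1 0] by auto
      then show ?thesis unfolding k_def by simp
    qed
    have pos: "(\<integral>s. p1 s * k s \<partial>lborel) > 0" by (rule pos_int[OF p1i p1nn kpos p1one pki])
    have "(\<integral>s. p1 s * k s \<partial>lborel) = (\<integral>s. p1 s * (1 - s) * phi ((1 - s) * t) \<partial>lborel) + (\<integral>s. p1 s * (1 + s) * phi ((1 + s) * t) \<partial>lborel)"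
      unfolding eqk by (rule Bochner_Integration.integral_add[OF i1 i2])
    moreover have "H' t = - (\<integral>s. p1 s * (1 - s) * phi ((1 - s) * t) \<partial>lborel) - (\<integral>s. p1 s * (1 + s) * phi ((1 + s) * t) \<partial>lborel)"
    proof -
      have e1: "I (\<lambda>s. p1 s * (1 - s)) (\<lambda>s. 1 - s) (\<lambda>u. - phi u) t = - (\<integral>s. p1 s * (1 - s) * phi ((1 - s) * t) \<partial>lborel)"
        unfolding I_def mult_minus_right by (rule Bochner_Integration.integral_minus)
      have e2: "I (\<lambda>s. p1 s * (1 + s)) (\<lambda>s. 1 + s) (\<lambda>u. - phi u) t = - (\<integral>s. p1 s * (1 + s) * phi ((1 + s) * t) \<partial>lborel)"
        unfolding I_def mult_minus_right by (rule Bochner_Integration.integral_minus)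
      show ?thesis unfolding H'_def e1 e2 by simp
    qed
    ultimately show ?thesis using pos by linarith
  qed
  have Fderiv: "deriv (F_fun \<alpha> p0) x > 0" if x: "x > 0" for x
  proof -
    define d where "d = (1 / sqrt 2) * ((- 1 / 2) * x powr (- 1 / 2 - 1))"
    have td: "(\<tau> has_real_derivative d) (at x)" unfolding \<tau>_def[abs_def] d_def by (rule tau_deriv[OF x])
    have "((\<lambda>x. \<alpha> * H (\<tau> x)) has_real_derivative \<alpha> * (H' (\<tau> x) * d)) (at x)"
      by (rule DERIV_cmult[OF DERIV_chain2[OF Hd td]])
    then have "(F_fun \<alpha> p0 has_real_derivative \<alpha> * (H' (\<tau> x) * d)) (at x)"
      by (rule has_field_derivative_transform_within_open[where S="{0<..}"]) (use x Frep in auto)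
    then have "deriv (F_fun \<alpha> p0) x = \<alpha> * (H' (\<tau> x) * d)" by (rule DERIV_imp_deriv)
    moreover have "d < 0" unfolding d_def using x by (simp add: mult_pos_neg)
    moreover have "H' (\<tau> x) < 0" by (rule H'neg)
    ultimately show ?thesis using assms(1) by (simp add: mult_neg_neg)
  qed
  have Hlim: "(H \<longlongrightarrow> 0) at_top"
  proof -
    have "((\<lambda>t. \<integral>s. p1 s * G t s \<partial>lborel) \<longlongrightarrow> (\<integral>(s::real). (0::real) \<partial>lborel)) at_top"
    proof (rule integral_dominated_convergence_at_top[where f="\<lambda>s. 0::real" and M=lborel
          and s="\<lambda>t s. p1 s * G t s" and w="\<lambda>s. 2 * \<bar>p1 s\<bar>"])
      show "(\<lambda>s. 0::real) \<in> borel_measurable lborel" by simp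
      show "(\<lambda>s. p1 s * G t s) \<in> borel_measurable lborel" for t by measurable
      show "integrable lborel (\<lambda>s. 2 * \<bar>p1 s\<bar>)" using p1i by simp
      show "\<forall>\<^sub>F t in at_top. AE s in lborel. norm (p1 s * G t s) \<le> 2 * \<bar>p1 s\<bar>"
      proof (intro always_eventually allI AE_I2)
        fix t s
        have "\<bar>p1 s\<bar> * G t s \<le> \<bar>p1 s\<bar> * 2" by (rule mult_left_mono[OF G_le2]) simp
        then show "norm (p1 s * G t s) \<le> 2 * \<bar>p1 s\<bar>" using G_nonneg[of t s] by (simp add: abs_mult)
      qed
      show "AE s in lborel. ((\<lambda>t. p1 s * G t s) \<longlongrightarrow> 0) at_top"
      proof (rule AE_I2)
        fix s
        show "((\<lambda>t. p1 s * G t s) \<longlongrightarrow> 0) at_top"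
        proof (cases "p1 s = 0")
          case True then show ?thesis by simp
        next
          case False
          then have s: "0 < 1 - s" "0 < 1 + s" using supp0[OF False] by auto
          have l1: "filterlim (\<lambda>t. (1 - s) * t) at_top at_top"
            by (rule filterlim_tendsto_pos_mult_at_top[OF tendsto_const s(1) filterlim_ident])
          have l2: "filterlim (\<lambda>t. (1 + s) * t) at_top at_top"
            by (rule filterlim_tendsto_pos_mult_at_top[OF tendsto_const s(2) filterlim_ident])
          have "((\<lambda>t. G t s) \<longlongrightarrow> 0 + 0) at_top"
            unfolding G_def by (rule tendsto_add[OF filterlim_compose[OF Q_lim l1] filterlim_compose[OF Q_lim l2]])
          then have "((\<lambda>t. p1 s * G t s) \<longlongrightarrow> p1 s * (0 + 0)) at_top" by (rule tendsto_mult_left)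
          then show ?thesis by simp
        qed
      qed
    qed
    moreover have "(\<lambda>t. \<integral>s. p1 s * G t s \<partial>lborel) = H" by (rule ext) (rule Hint1)
    ultimately show ?thesis by simp
  qed
  have cont: "continuous_on {0..} (F_fun \<alpha> p0)"
    unfolding continuous_on_eq_continuous_within
  proof
    fix x :: real assume "x \<in> {0..}"
    show "continuous (at x within {0..}) (F_fun \<alpha> p0)"
    proof (cases "x = 0")
      case False
      then have "x > 0" using \<open>x \<in> {0..}\<close> by simp
      then have "F_fun \<alpha> p0 differentiable (at x)" using smF[of 0] unfolding sm_0 by simp
      then have "isCont (F_fun \<alpha> p0) x" by (rule differentiable_imp_continuous_within)
      then show ?thesis by (rule continuous_at_imp_continuous_within)
    next
      case True
      have F0: "F_fun \<alpha> p0 0 = 0" using assms(6) by (simp add: F_fun_def)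
      have "((\<lambda>x. \<alpha> * H (\<tau> x)) \<longlongrightarrow> \<alpha> * 0) (at_right 0)"
        by (rule tendsto_mult_left[OF filterlim_compose[OF Hlim tau_lim[folded \<tau>_def]]])
      moreover have "eventually (\<lambda>x. \<alpha> * H (\<tau> x) = F_fun \<alpha> p0 x) (at_right 0)"
        using eventually_at_right_less[of "0::real"] by eventually_elim (simp add: Frep)
      ultimately have "(F_fun \<alpha> p0 \<longlongrightarrow> 0) (at_right 0)" using tendsto_cong by fastforce
      then show ?thesis unfolding True continuous_within at_within_Ici_at_right F0 .
    qed
  qed
  show ?thesis using cont smooth Fpos Fderiv by blast
qed


end
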